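(* Let $0<q<1$. For every complex number $z$, $$|A_q(z)|\le e^{q|z|/(1-q)},$$ and for every complex number $z\neq 0$, $$|A_q(z)|\le \frac{\left(\frac{|z|}{\sqrt q}\right)^{1/2}\exp\left\{-\frac{\log^2|z|}{4\log q}\right\}}{(q;q)_\infty}.$$
   Context: Notation: $(a;q)_0:=1$, $(a;q)_k:=\prod_{j=0}^{k-1}(1-aq^j)$, $(a;q)_\infty:=\prod_{j=0}^{\infty}(1-aq^j)$. Ramanujan's function is the entire function $A_q(z):=\sum_{k=0}^{\infty}\frac{q^{k^2}}{(q;q)_k}(-z)^k$. Logarithms and powers are principal branches (here only applied to positive reals). *)

theory Defs
  imports "HOL-Analysis.Analysis"
begin

definition qpoch :: "'a::comm_ring_1 \<Rightarrow> 'a \<Rightarrow> nat \<Rightarrow> 'a" where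
  "qpoch a q k = (\<Prod>j<k. (1 - a * q ^ j))"

definition qpoch_inf :: "real \<Rightarrow> real \<Rightarrow> real" where
  "qpoch_inf a q = (\<Prod>j. (1 - a * q ^ j))"

definition ramanujanA :: "real \<Rightarrow> complex \<Rightarrow> complex" where
  "ramanujanA q z = (\<Sum>k. complex_of_real (q ^ (k^2) / qpoch q q k) * (- z) ^ k)"

end

theory Submission
  imports Defs
begin

lemma qp_Suc: "qpoch (q::real) q (Suc k) = qpoch q q k * (1 - q ^ Suc k)"
  by (simp add: qpoch_def)

lemma qp_pos: assumes "0 < (q::real)" "q < 1" shows "0 < qpoch q q k"
proof (induction k)
  case 0 then show ?case by (simp add: qpoch_def)
next
  case (Suc k)
  have "q ^ Suc k < 1" using assms by (rule power_Suc_less_one)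
  then show ?case using Suc by (simp add: qp_Suc)
qed

lemma one_minus_pow_ge: assumes "0 < (q::real)" "q < 1"
  shows "(1 - q) * real (Suc k) * q ^ k \<le> 1 - q ^ Suc k"
proof -
  have "1 - q ^ Suc k = (1 - q) * (\<Sum>i<Suc k. q ^ i)" by (rule one_diff_power_eq)
  moreover have "(\<Sum>i<Suc k. q ^ k) \<le> (\<Sum>i<Suc k. q ^ i)"
    by (intro sum_mono power_decreasing) (use assms in auto)
  ultimately show ?thesis using assms by (simp add: mult_left_mono)
qed

lemma qp_lower: assumes "0 < (q::real)" "q < 1"
  shows "q ^ (k^2) * (1 - q) ^ k * fact k \<le> q ^ k * qpoch q q k"
proof (induction k)
  case 0 then show ?case by (simp add: qpoch_def)
next
  case (Suc k)
  have ee: "(Suc k)^2 = k^2 + (2*k+1)" by (simp add: power2_eq_square)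
  have e1: "q ^ ((Suc k)^2) = q ^ (k^2) * q ^ (2*k+1)"
    unfolding ee by (rule power_add)
  have "q ^ (2*k+1) * ((1 - q) * real (Suc k)) \<le> q ^ (k+1) * ((1 - q) * real (Suc k))"
    using assms by (intro mult_right_mono power_decreasing) auto
  also have "\<dots> = q * ((1 - q) * real (Suc k) * q ^ k)" by simp
  also have "\<dots> \<le> q * (1 - q ^ Suc k)"
    using one_minus_pow_ge[OF assms, of k] assms by (intro mult_left_mono) auto
  finally have st: "q ^ (2*k+1) * ((1 - q) * real (Suc k)) \<le> q * (1 - q ^ Suc k)" .
  have "q ^ ((Suc k)^2) * (1 - q) ^ Suc k * fact (Suc k)
      = (q ^ (k^2) * (1 - q) ^ k * fact k) * (q ^ (2*k+1) * ((1 - q) * real (Suc k)))"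
    by (simp add: e1 algebra_simps)
  also have "\<dots> \<le> (q ^ k * qpoch q q k) * (q * (1 - q ^ Suc k))"
    by (rule mult_mono[OF Suc.IH st]) (use assms qp_pos[OF assms, of k] in auto)
  also have "\<dots> = q ^ Suc k * qpoch q q (Suc k)" by (simp add: qp_Suc algebra_simps)
  finally show ?case .
qed

lemma qp_partial: assumes "0 < (q::real)" "q < 1"
  shows "(\<Sum>k<Suc n. q ^ k / qpoch q q k) = 1 / qpoch q q n"
proof (induction n)
  case 0 then show ?case by (simp add: qpoch_def)
next
  case (Suc n)
  have p: "0 < qpoch q q n" using qp_pos[OF assms] by auto
  have "q ^ Suc n < 1" using assms by (rule power_Suc_less_one)
  then have "1 - q ^ Suc n \<noteq> 0" by simp
  then show ?case using Suc p by (simp add: qp_Suc field_simps)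
qed

lemma qp_inf: assumes "0 < (q::real)" "q < 1"
  shows "0 < qpoch_inf q q" "\<And>n. qpoch_inf q q \<le> qpoch q q n"
proof -
  let ?f = "\<lambda>j. 1 - q * q ^ j"
  have "summable (\<lambda>j. norm (?f j - 1))"
  proof -
    have "summable (\<lambda>j. q * q ^ j)"
      using assms by (intro summable_mult summable_geometric) simp
    moreover have "norm (?f j - 1) = q * q ^ j" for j using assms by simp
    ultimately show ?thesis by simp
  qed
  then have cp: "convergent_prod ?f"
    by (intro abs_convergent_prod_imp_convergent_prod summable_imp_abs_convergent_prod)
  have nz: "?f j \<noteq> 0" for j
  proof -
    have "q ^ Suc j < 1" using assms by (rule power_Suc_less_one)
    then show ?thesis by simp
  qed
  have lim: "(\<lambda>n. \<Prod>i\<le>n. ?f i) \<longlonglongrightarrow> qpoch_inf q q"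
    unfolding qpoch_inf_def by (rule convergent_prod_LIMSEQ[OF cp])
  have eq: "(\<Prod>i\<le>n. ?f i) = qpoch q q (Suc n)" for n
    by (simp add: qpoch_def lessThan_Suc_atMost)
  have dec: "decseq (\<lambda>n. \<Prod>i\<le>n. ?f i)"
  proof (rule decseq_SucI)
    fix n
    have "0 < qpoch q q (Suc n)" using qp_pos[OF assms] by auto
    moreover have "0 \<le> q ^ Suc (Suc n)" using assms by simp
    ultimately show "(\<Prod>i\<le>Suc n. ?f i) \<le> (\<Prod>i\<le>n. ?f i)"
      unfolding eq by (simp add: qp_Suc[of q "Suc n"] mult_le_cancel_left1)
  qed
  have le: "qpoch_inf q q \<le> qpoch q q (Suc n)" for n
    using decseq_ge[OF dec lim, of n] eq by simp
  have ge0: "0 \<le> qpoch_inf q q"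
  proof (rule LIMSEQ_le_const[OF lim])
    show "\<exists>N. \<forall>n\<ge>N. 0 \<le> (\<Prod>i\<le>n. ?f i)"
      using qp_pos[OF assms] eq less_imp_le by metis
  qed
  have "qpoch_inf q q \<noteq> 0" unfolding qpoch_inf_def by (rule prodinf_nonzero[OF cp nz])
  then show "0 < qpoch_inf q q" using ge0 by simp
  fix n
  show "qpoch_inf q q \<le> qpoch q q n"
  proof (cases n)
    case 0 
    have "qpoch q q 1 \<le> qpoch q q 0" using assms by (simp add: qpoch_def)
    then show ?thesis using le[of 0] 0 by simp
  next
    case (Suc m) then show ?thesis using le by simp
  qed
qed

lemma term_norm: assumes "0 < (q::real)" "q < 1"
  shows "cmod (complex_of_real (q ^ (k^2) / qpoch q q k) * (- z) ^ k)
         = q ^ (k^2) / qpoch q q k * cmod z ^ k"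
  unfolding norm_mult norm_power norm_minus_cancel norm_of_real
  using qp_pos[OF assms, of k] assms by simp

lemma bound1: assumes "0 < (q::real)" "q < 1"
  shows "cmod (ramanujanA q z) \<le> exp (q * cmod z / (1 - q))"
proof -
  let ?x = "q * cmod z / (1 - q)"
  have s: "(\<lambda>n. ?x ^ n / fact n) sums exp ?x"
    using exp_converges[of ?x] by (simp add: divide_inverse mult.commute)
  have b: "cmod (complex_of_real (q ^ (k^2) / qpoch q q k) * (- z) ^ k) \<le> ?x ^ k / fact k" for k
  proof -
    have p: "0 < qpoch q q k" using qp_pos[OF assms] by auto
    have l: "q ^ (k^2) * (1 - q) ^ k * fact k \<le> q ^ k * qpoch q q k" by (rule qp_lower[OF assms])
    have "q ^ (k^2) / qpoch q q k \<le> q ^ k / ((1 - q) ^ k * fact k)"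
      using p l assms by (simp add: divide_simps mult.assoc mult.commute mult.left_commute)
    then have "q ^ (k^2) / qpoch q q k * cmod z ^ k \<le> q ^ k / ((1 - q) ^ k * fact k) * cmod z ^ k"
      by (intro mult_right_mono) auto
    also have "\<dots> = ?x ^ k / fact k" by (simp add: power_divide power_mult_distrib)
    finally show ?thesis using term_norm[OF assms] by simp
  qed
  show ?thesis unfolding ramanujanA_def
    using norm_suminf_le[OF b sums_summable[OF s]] sums_unique[OF s] by simp
qed

lemma gauss_bound: assumes "0 < (q::real)" "q < 1" "0 < r"
  shows "q ^ (k^2) * r ^ k \<le> q ^ k * ((r / sqrt q) powr (1/2) * exp (- ((ln r) ^ 2) / (4 * ln q)))"
proof -
  define L where "L = ln q"
  define s where "s = ln r"
  have L: "L < 0" using assms unfolding L_def by simp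
  have lhs: "q ^ (k^2) * r ^ k = exp (real k ^ 2 * L + real k * s)"
  proof -
    have a: "r ^ k = exp (real k * s)" unfolding s_def exp_of_nat_mult using assms by simp
    have b: "q ^ (k^2) = exp (real (k^2) * L)" unfolding L_def exp_of_nat_mult using assms by simp
    show ?thesis unfolding a b by (simp add: exp_add[symmetric] mult.commute)
  qed
  have rq: "q ^ k = exp (real k * L)" unfolding L_def exp_of_nat_mult using assms by simp
  have pw: "(r / sqrt q) powr (1/2) = exp ((s - L/2) / 2)"
    using assms unfolding L_def s_def by (simp add: powr_def ln_div ln_sqrt)
  have key: "real k ^ 2 * L + real k * s \<le> real k * L + ((s - L/2) / 2 + (- (s ^ 2) / (4 * L)))"
  proof -
    have Lnz: "L \<noteq> 0" using L by simp
    have eq: "(real k * L + ((s - L/2) / 2 + (- (s ^ 2) / (4 * L)))) - (real k ^ 2 * L + real k * s)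
       = (2*L*real k - L + s)^2 / (-(4*L))"
      using Lnz by (simp add: field_simps power2_eq_square)
    have "0 \<le> (2*L*real k - L + s)^2 / (-(4*L))" using L by (intro divide_nonneg_pos) auto
    then show ?thesis using eq by linarith
  qed
  show ?thesis unfolding lhs rq pw
    using key by (simp add: exp_add[symmetric] s_def L_def)
qed

lemma bound2: assumes "0 < (q::real)" "q < 1" "z \<noteq> 0"
  shows "cmod (ramanujanA q z) \<le>
              ((cmod z / sqrt q) powr (1/2) * exp (- ((ln (cmod z)) ^ 2) / (4 * ln q)))
              / qpoch_inf q q"
proof -
  define B where "B = (cmod z / sqrt q) powr (1/2) * exp (- ((ln (cmod z)) ^ 2) / (4 * ln q))"
  have B0: "0 \<le> B" unfolding B_def by simp
  have r: "0 < cmod z" using assms by simp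
  have Pi: "0 < qpoch_inf q q" "\<And>n. qpoch_inf q q \<le> qpoch q q n" using qp_inf[OF assms(1,2)] by auto
  have sg: "summable (\<lambda>k. q ^ k / qpoch q q k)"
  proof (rule summableI_nonneg_bounded)
    show "0 \<le> q ^ k / qpoch q q k" for k using qp_pos[OF assms(1,2), of k] assms by simp
    show "sum (\<lambda>k. q ^ k / qpoch q q k) {..<n} \<le> 1 / qpoch_inf q q" for n
    proof -
      have "sum (\<lambda>k. q ^ k / qpoch q q k) {..<n} \<le> sum (\<lambda>k. q ^ k / qpoch q q k) {..<Suc n}"
        using qp_pos[OF assms(1,2), of n] assms by simp
      also have "\<dots> = 1 / qpoch q q n" by (rule qp_partial[OF assms(1,2)])
      also have "\<dots> \<le> 1 / qpoch_inf q q" using Pi qp_pos[OF assms(1,2), of n] by (intro divide_left_mono) auto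
      finally show ?thesis .
    qed
  qed
  have sle: "(\<Sum>k. q ^ k / qpoch q q k) \<le> 1 / qpoch_inf q q"
  proof (rule suminf_le_const[OF sg])
    fix n
    have "sum (\<lambda>k. q ^ k / qpoch q q k) {..<n} \<le> sum (\<lambda>k. q ^ k / qpoch q q k) {..<Suc n}"
      using qp_pos[OF assms(1,2), of n] assms by simp
    also have "\<dots> = 1 / qpoch q q n" by (rule qp_partial[OF assms(1,2)])
    also have "\<dots> \<le> 1 / qpoch_inf q q" using Pi qp_pos[OF assms(1,2), of n] by (intro divide_left_mono) auto
    finally show "sum (\<lambda>k. q ^ k / qpoch q q k) {..<n} \<le> 1 / qpoch_inf q q" .
  qed
  have b: "cmod (complex_of_real (q ^ (k^2) / qpoch q q k) * (- z) ^ k) \<le> B * (q ^ k / qpoch q q k)" for k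
  proof -
    have p: "0 < qpoch q q k" using qp_pos[OF assms(1,2)] by auto
    have "q ^ (k^2) * cmod z ^ k \<le> q ^ k * B"
      unfolding B_def by (rule gauss_bound[OF assms(1,2) r])
    then have "q ^ (k^2) / qpoch q q k * cmod z ^ k \<le> B * (q ^ k / qpoch q q k)"
      using p by (simp add: divide_simps mult.commute)
    then show ?thesis using term_norm[OF assms(1,2)] by simp
  qed
  have "cmod (ramanujanA q z) \<le> (\<Sum>k. B * (q ^ k / qpoch q q k))"
    unfolding ramanujanA_def by (rule norm_suminf_le[OF b summable_mult[OF sg]])
  also have "\<dots> = B * (\<Sum>k. q ^ k / qpoch q q k)" by (rule suminf_mult[OF sg])
  also have "\<dots> \<le> B * (1 / qpoch_inf q q)" by (rule mult_left_mono[OF sle B0])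
  finally show ?thesis unfolding B_def by simp
qed

theorem mainTheorem3:
  fixes q :: real
  assumes "0 < q" "q < 1"
  shows "(\<forall>z::complex. cmod (ramanujanA q z) \<le> exp (q * cmod z / (1 - q)))
       \<and> (\<forall>z::complex. z \<noteq> 0 \<longrightarrow>
            cmod (ramanujanA q z) \<le>
              ((cmod z / sqrt q) powr (1/2) * exp (- ((ln (cmod z)) ^ 2) / (4 * ln q)))
              / qpoch_inf q q)"
  using bound1[OF assms] bound2[OF assms] by blast

end
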